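(* Let $l\geq 2$ and $K_l=K(10(l-1)+7,4(l-1)+3)$. With respect to the presentation $\pi_1(S^3\setminus K_l)=\langle a,b\mid va=bv\rangle$, $v=c^{l-1}d$, $c=aba^{-1}b^{-1}abab^{-1}a^{-1}b$, $d=aba^{-1}b^{-1}ab$, the Riley polynomial $\phi_{K_l}(x,y)$ is such that $\phi_{K_l}(2\cos(\pi/n),y)$ has a real root $y_n>2$ in the following cases: (1) $n\geq 5$ when $l=2$; (2) $n\geq 4$ when $l=3$; (3) $n\geq 3$ when $l\geq 4$.
   Context: $K(p,q)$ is the two-bridge knot with fraction $p/q$; $a,b$ are meridians. Riley polynomial: with $A=\begin{bmatrix}s&1\\0&s^{-1}\end{bmatrix}$, $B=\begin{bmatrix}s&0\\2-y&s^{-1}\end{bmatrix}$ and $V$ the word $v$ evaluated at $A,B$, the $(1,2)$-entry of $VA-BV$ equals $f(s+s^{-1},y)$ for some $f\in\mathbb{Z}[x,y]$, and $\phi_{K_l}:=f$. Explicitly $\phi_{K_l}=S_{l-1}(\lambda)\alpha-S_{l-2}(\lambda)\beta$ where $S_n$ are Chebyshev polynomials ($S_0=1$, $S_1=z$, $S_{n+1}=zS_n-S_{n-1}$), $\lambda(x,y)=9x^2-12x^4+4x^6-5y+10x^2y+2x^4y-4x^6y-11x^2y^2+8x^4y^2+x^6y^2+5y^3-4x^2y^3-3x^4y^3+3x^2y^4-y^5$, $\alpha(x,y)=1-4x^2+2x^4+2y-x^2y-x^4y-y^2+2x^2y^2-y^3$, $\beta(x,y)=-1+x^2-y$. *)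

theory Defs
  imports Complex_Main
begin

fun cheb_S :: "nat \<Rightarrow> real \<Rightarrow> real" where
  "cheb_S 0 z = 1"
| "cheb_S (Suc 0) z = z"
| "cheb_S (Suc (Suc n)) z = z * cheb_S (Suc n) z - cheb_S n z"

definition riley_lambda :: "real \<Rightarrow> real \<Rightarrow> real" where
  "riley_lambda x y = 9*x^2 - 12*x^4 + 4*x^6 - 5*y + 10*x^2*y + 2*x^4*y - 4*x^6*y
     - 11*x^2*y^2 + 8*x^4*y^2 + x^6*y^2 + 5*y^3 - 4*x^2*y^3 - 3*x^4*y^3 + 3*x^2*y^4 - y^5"

definition riley_alpha :: "real \<Rightarrow> real \<Rightarrow> real" where
  "riley_alpha x y = 1 - 4*x^2 + 2*x^4 + 2*y - x^2*y - x^4*y - y^2 + 2*x^2*y^2 - y^3"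

definition riley_beta :: "real \<Rightarrow> real \<Rightarrow> real" where
  "riley_beta x y = -1 + x^2 - y"

text \<open>Riley polynomial of K_l = K(10(l-1)+7, 4(l-1)+3), for l >= 2 (so that l-2 is a genuine index).\<close>
definition riley_phi :: "nat \<Rightarrow> real \<Rightarrow> real \<Rightarrow> real" where
  "riley_phi l x y = cheb_S (l - 1) (riley_lambda x y) * riley_alpha x y
                    - cheb_S (l - 2) (riley_lambda x y) * riley_beta x y"

end

theory Submission
  imports Defs
begin

lemma cheb_sin: "sin t * cheb_S k (2 * cos t) = sin (real (Suc k) * t)"
proof (induction k rule: nat_less_induct)
  case (1 k)
  show ?case
  proof (cases k)
    case 0 then show ?thesis by simp
  next
    case (Suc m)
    show ?thesis
    proof (cases m)
      case 0
      with Suc show ?thesis using sin_double[of t] by (simp add: mult_ac)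
    next
      case (Suc j)
      have h1: "sin t * cheb_S (Suc j) (2 * cos t) = sin (real (Suc (Suc j)) * t)"
        using "1" Suc \<open>k = Suc m\<close> by auto
      have h0: "sin t * cheb_S j (2 * cos t) = sin (real (Suc j) * t)"
        using "1" Suc \<open>k = Suc m\<close> by auto
      define a where "a = real (Suc (Suc j)) * t"
      have e1: "real (Suc (Suc (Suc j))) * t = a + t" unfolding a_def by (simp add: algebra_simps)
      have e2: "real (Suc j) * t = a - t" unfolding a_def by (simp add: algebra_simps)
      have "sin t * cheb_S (Suc (Suc j)) (2 * cos t)
          = 2 * cos t * (sin t * cheb_S (Suc j) (2 * cos t)) - sin t * cheb_S j (2 * cos t)"
        by (simp add: algebra_simps)
      also have "\<dots> = 2 * cos t * sin a - sin (a - t)" using h1 h0 e2 a_def by simp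
      also have "\<dots> = sin (a + t)" by (simp add: sin_add sin_diff algebra_simps)
      finally show ?thesis using e1 Suc \<open>k = Suc m\<close> by simp
    qed
  qed
qed

lemma cheb_cont: "isCont (cheb_S k) z"
proof (induction k rule: nat_less_induct)
  case (1 k)
  show ?case
  proof (cases k)
    case 0 then show ?thesis by simp
  next
    case (Suc m)
    show ?thesis
    proof (cases m)
      case 0
      with Suc show ?thesis by (simp add: cheb_S.simps(2)[abs_def])
    next
      case (Suc j)
      have eq: "cheb_S (Suc (Suc j)) = (\<lambda>z. z * cheb_S (Suc j) z - cheb_S j z)" by (rule ext) simp
      have "isCont (cheb_S (Suc j)) z" "isCont (cheb_S j) z" using "1" Suc \<open>k = Suc m\<close> by auto
      then have "isCont (\<lambda>z. z * cheb_S (Suc j) z - cheb_S j z) z" by (intro continuous_intros) auto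
      then show ?thesis using eq Suc \<open>k = Suc m\<close> by simp
    qed
  qed
qed

lemma lam_cont: "isCont (riley_lambda x) y"
  unfolding riley_lambda_def[abs_def] by (intro continuous_intros)

lemma phi_cont: "isCont (riley_phi l x) y"
proof -
  have "isCont (\<lambda>y. cheb_S (l - 1) (riley_lambda x y)) y"
    by (rule isCont_o2[OF lam_cont cheb_cont])
  moreover have "isCont (\<lambda>y. cheb_S (l - 2) (riley_lambda x y)) y"
    by (rule isCont_o2[OF lam_cont cheb_cont])
  ultimately show ?thesis unfolding riley_phi_def[abs_def] riley_alpha_def riley_beta_def
    by (intro continuous_intros) auto
qed

lemma lam_2: "riley_lambda x 2 = x^2 - 2"
  unfolding riley_lambda_def by algebra

lemma lam_u1: "riley_lambda x (x^2 - 1) = 1"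
  unfolding riley_lambda_def by algebra

lemma alpha_2: "riley_alpha x 2 = 2*x^2 - 7"
  unfolding riley_alpha_def by algebra

lemma alpha_neg:
  assumes "1 \<le> x^2" "x^2 \<le> 4" "2 \<le> y" "x^2 - 1 \<le> y"
  shows "riley_alpha x y < 0"
proof (cases "x^2 \<le> 3")
  case True
  define t where "t = y - 2"
  define u where "u = x^2"
  have t0: "t \<ge> 0" using assms t_def by simp
  have eq: "riley_alpha x y = -1 - 2*t - t^2 - t^3 - 2*(3-u)*(1+t^2) - t*((u-3)*(u-4))"
    unfolding riley_alpha_def t_def u_def by algebra
  have "0 \<le> (u-3)*(u-4)" using True u_def by (intro mult_nonpos_nonpos) auto
  then have a: "0 \<le> t*((u-3)*(u-4))" using t0 by simp
  have b: "0 \<le> 2*(3-u)*(1+t^2)" using True u_def by simp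
  have c: "0 \<le> t^3" using t0 by simp
  have d: "0 \<le> t^2" by simp
  show ?thesis using eq a b c d t0 by linarith
next
  case False
  define t where "t = y - x^2 + 1"
  define u where "u = x^2"
  have t0: "t \<ge> 0" using assms t_def by simp
  have eq: "riley_alpha x y = -1 - 2*t - t^2 - t^3 - (u-3)*(t+t^2)"
    unfolding riley_alpha_def t_def u_def by algebra
  have b: "0 \<le> (u-3)*(t+t^2)" using False u_def t0 by simp
  have c: "0 \<le> t^3" using t0 by simp
  have d: "0 \<le> t^2" by simp
  show ?thesis using eq b c d t0 by linarith
qed

lemma lam_4:
  assumes "x^2 \<le> 4"
  shows "riley_lambda x 4 \<le> -2"
proof -
  define u where "u = x^2"
  have eq: "riley_lambda x 4 = -16 + (u-4)*(4*(u-13/2)^2 + 8)"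
    unfolding riley_lambda_def u_def by algebra
  have "(u-4)*(4*(u-13/2)^2 + 8) \<le> 0" using assms u_def
    by (intro mult_nonpos_nonneg) auto
  then show ?thesis using eq by linarith
qed

lemma sign_change_root:
  fixes f :: "real \<Rightarrow> real"
  assumes cont: "\<And>x. isCont f x" and ab: "a \<le> b" and prod: "f a * f b < 0"
  shows "\<exists>x. a < x \<and> x < b \<and> f x = 0"
proof -
  have fa: "f a \<noteq> 0" and fb: "f b \<noteq> 0" using prod by auto
  have "\<exists>x. a \<le> x \<and> x \<le> b \<and> f x = 0"
  proof (cases "f a < 0")
    case True
    then have "f b > 0" using prod by (simp add: mult_less_0_iff)
    then show ?thesis using IVT[of f a 0 b] True ab cont by auto
  next
    case False
    then have "f a > 0" "f b < 0" using prod fa by (auto simp add: mult_less_0_iff)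
    then show ?thesis using IVT2[of f b 0 a] ab cont by auto
  qed
  then obtain x where "a \<le> x" "x \<le> b" "f x = 0" by blast
  moreover have "x \<noteq> a" "x \<noteq> b" using fa fb \<open>f x = 0\<close> by auto
  ultimately show ?thesis by (intro exI[of _ x]) (auto simp: less_le)
qed

lemma root_above_2:
  assumes "2 \<le> y1" "2 \<le> y2" "riley_phi l x y1 * riley_phi l x y2 < 0"
  shows "\<exists>y::real. y > 2 \<and> riley_phi l x y = 0"
proof (cases "y1 \<le> y2")
  case True
  from sign_change_root[OF phi_cont True assms(3)] assms show ?thesis by force
next
  case False
  have "riley_phi l x y2 * riley_phi l x y1 < 0" using assms(3) by (simp add: mult.commute)
  from sign_change_root[OF phi_cont _ this] False assms show ?thesis by force
qed

lemma exists_lam: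
  assumes "x^2 \<le> 4" "ys \<le> 4" "c \<le> riley_lambda x ys" "-2 \<le> c"
  shows "\<exists>y. ys \<le> y \<and> y \<le> 4 \<and> riley_lambda x y = c"
  using IVT2[of "riley_lambda x" 4 c ys] assms lam_4[OF assms(1)] lam_cont by auto

lemma cos_pin_ge:
  assumes "1 \<le> m" "m \<le> n"
  shows "cos (pi / real m) \<le> cos (pi / real n)"
proof (rule cos_monotone_0_pi_le)
  show "0 \<le> pi / real n" by simp
  show "pi / real n \<le> pi / real m" using assms
    by (intro divide_left_mono) auto
  show "pi / real m \<le> pi" using assms by (simp add: divide_le_eq)
qed

lemma cos_pi5: "4 * cos (pi/5)^2 = 2 * cos (pi/5) + 1"
proof -
  define c where "c = cos (pi/5)"
  have t: "cos (3*(pi/5)) = 4*c^3 - 3*c" unfolding c_def by (rule cos_treble_cos)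
  have "cos (3*(pi/5)) = cos (pi - 2*(pi/5))" by (rule arg_cong[where f=cos]) simp
  also have "\<dots> = - cos (2*(pi/5))" by (rule cos_pi_minus)
  also have "\<dots> = - (2*c^2 - 1)" unfolding c_def by (simp only: cos_double_cos)
  finally have "cos (3*(pi/5)) = - (2*c^2 - 1)" .
  with t have "(c+1)*(4*c^2 - 2*c - 1) = 0" by algebra
  moreover have "c > 0" unfolding c_def using pi_gt_zero by (intro cos_gt_zero_pi) linarith+
  ultimately have "4*c^2 - 2*c - 1 = 0" by simp
  then show ?thesis unfolding c_def by simp
qed

lemma sin_kpi_plus: "sin (real k * pi + a) = (-1)^k * sin a"
  by (simp add: sin_add)

lemma neg1_sq: "((-1::real)^k) * ((-1)^k) = 1"
  by (cases "even k") auto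

theorem theorem6p1:
  fixes l n :: nat
  assumes "l \<ge> 2"
    and "(l = 2 \<and> n \<ge> 5) \<or> (l = 3 \<and> n \<ge> 4) \<or> (l \<ge> 4 \<and> n \<ge> 3)"
  shows "\<exists>y::real. y > 2 \<and> riley_phi l (2 * cos (pi / real n)) y = 0"
proof -
  define x where "x = 2 * cos (pi / real n)"
  have n3: "n \<ge> 3" using assms(2) by auto
  have c3: "cos (pi / real n) \<ge> 1/2" using cos_pin_ge[of 3 n] n3 cos_60 by simp
  have cle: "cos (pi / real n) \<le> 1" by simp
  have x1: "1 \<le> x" using c3 x_def by simp
  have u1: "1 \<le> x^2" using one_le_power[OF x1] .
  have u4: "x^2 \<le> 4" using power_mono[of x 2 2] x1 cle x_def by simp
  define ys where "ys = (if x^2 \<le> 3 then 2 else x^2 - 1)"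
  have ys2: "2 \<le> ys" and ysu: "x^2 - 1 \<le> ys" and ys4: "ys \<le> 4" using u4 by (auto simp: ys_def)
  have lys: "riley_lambda x ys = (if x^2 \<le> 3 then x^2 - 2 else 1)"
    by (simp add: ys_def lam_2 lam_u1)
  have lys1: "-1 \<le> riley_lambda x ys" using lys u1 by auto
  have lam_ne: "y > x^2 - 1" if "y \<ge> ys" "riley_lambda x y < 1" for y
  proof -
    have "y \<noteq> x^2 - 1" using that lam_u1[of x] by auto
    then show ?thesis using that ysu by auto
  qed
  have alneg: "riley_alpha x y < 0" if "y \<ge> ys" for y
    using alpha_neg[OF u1 u4] that ys2 ysu by auto
  have beneg: "riley_beta x y < 0" if "y > x^2 - 1" for y
    using that by (simp add: riley_beta_def)
  have "\<exists>y::real. y > 2 \<and> riley_phi l x y = 0"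
  proof (cases "l = 2")
    case True
    then have n5: "n \<ge> 5" using assms(2) by auto
    define c where "c = cos (pi/5)"
    have "cos (pi/4) \<le> c" unfolding c_def using cos_pin_ge[of 4 5] by simp
    then have "sqrt 2 / 2 \<le> c" by (simp add: cos_45)
    moreover have "1.4 \<le> sqrt 2" by (rule real_le_rsqrt) (simp add: power2_eq_square)
    ultimately have c7: "0.7 \<le> c" by simp
    have "c \<le> cos (pi / real n)" unfolding c_def using cos_pin_ge[of 5 n] n5 by simp
    then have "c^2 \<le> cos (pi / real n)^2" using c7 by (intro power_mono) auto
    then have "4*c^2 \<le> x^2" by (simp add: x_def power_mult_distrib)
    then have u24: "2.4 \<le> x^2" using cos_pi5 c7 unfolding c_def by simp
    have phi2: "riley_phi l x y = riley_lambda x y * riley_alpha x y - riley_beta x y" for y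
      using True by (simp add: riley_phi_def)
    have p1: "riley_phi l x ys < 0"
    proof (cases "x^2 \<le> 3")
      case True
      have "(3 - x^2)^2 \<le> 0.6^2" using True u24 by (intro power_mono) auto
      moreover have "riley_phi l x ys = 2*(3 - x^2)^2 - 1"
        using True by (simp add: phi2 ys_def lam_2 alpha_2 riley_beta_def algebra_simps power2_eq_square)
      ultimately show ?thesis by (simp add: power2_eq_square)
    next
      case False
      have "riley_phi l x ys = riley_alpha x ys"
        using False by (simp add: phi2 ys_def lam_u1 riley_beta_def)
      then show ?thesis using alneg by simp
    qed
    have "0 \<le> riley_lambda x ys" using lys u24 by auto
    then obtain y2 where y2: "ys \<le> y2" "y2 \<le> 4" "riley_lambda x y2 = 0"
      using exists_lam[OF u4 ys4, of 0] by auto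
    then have "y2 > x^2 - 1" using lam_ne by simp
    then have "riley_phi l x y2 > 0" using beneg y2 by (simp add: phi2)
    then have "riley_phi l x ys * riley_phi l x y2 < 0" using p1 by (simp add: mult_neg_pos)
    moreover have "2 \<le> y2" using ys2 y2 by simp
    ultimately show ?thesis using root_above_2[OF ys2] by blast
  next
    case False
    define k where "k = l - 2"
    have lk: "l = k + 2" and k1: "k \<ge> 1" using False assms(1) by (auto simp: k_def)
    have phik: "riley_phi l x y = cheb_S (Suc k) (riley_lambda x y) * riley_alpha x y
        - cheb_S k (riley_lambda x y) * riley_beta x y" for y
      using lk by (simp add: riley_phi_def)
    define t1 where "t1 = pi - pi / real (Suc k)"
    define t2 where "t2 = pi - pi / real (Suc (Suc k))"
    have s1: "sin t1 > 0" unfolding t1_def using k1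
      by (simp, intro sin_gt_zero) (auto simp: divide_less_eq)
    have s2: "sin t2 > 0" unfolding t2_def using k1
      by (simp, intro sin_gt_zero) (auto simp: divide_less_eq)
    have e1: "real (Suc k) * t1 = real k * pi" unfolding t1_def by (simp add: field_simps)
    have e2: "real (Suc (Suc k)) * t1 = real k * pi + t1" unfolding t1_def by (simp add: field_simps)
    have e3: "real (Suc (Suc k)) * t2 = real (Suc k) * pi" unfolding t2_def by (simp add: field_simps)
    have e4: "real (Suc k) * t2 = real k * pi + (pi - t2)" unfolding t2_def by (simp add: field_simps)
    define c1 where "c1 = 2 * cos t1"
    define c2 where "c2 = 2 * cos t2"
    have "sin t1 * cheb_S k c1 = 0" unfolding c1_def cheb_sin e1 by simp
    then have S1a: "cheb_S k c1 = 0" using s1 by simp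
    have "sin t1 * cheb_S (Suc k) c1 = (-1)^k * sin t1" unfolding c1_def cheb_sin e2 sin_kpi_plus ..
    then have S1b: "cheb_S (Suc k) c1 = (-1)^k" using s1 by simp
    have "sin t2 * cheb_S (Suc k) c2 = 0" unfolding c2_def cheb_sin e3 by (rule sin_npi)
    then have S2a: "cheb_S (Suc k) c2 = 0" using s2 by simp
    have "sin t2 * cheb_S k c2 = (-1)^k * sin t2" unfolding c2_def cheb_sin e4 sin_kpi_plus by simp
    then have S2b: "cheb_S k c2 = (-1)^k" using s2 by simp
    have c1eq: "c1 = -2 * cos (pi / real (Suc k))" unfolding c1_def t1_def by simp
    have c2eq: "c2 = -2 * cos (pi / real (Suc (Suc k)))" unfolding c2_def t2_def by simp
    have c1lo: "-2 \<le> c1" using c1eq by simp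
    have c2lo: "-2 \<le> c2" using c2eq by simp
    have "cos (pi/3) \<le> cos (pi / real (Suc (Suc k)))" using cos_pin_ge[of 3 "Suc (Suc k)"] k1 by simp
    then have c2hi: "c2 \<le> -1" using c2eq cos_60 by simp
    have c1hi: "c1 \<le> riley_lambda x ys"
    proof (cases "k = 1")
      case True
      then have "l = 3" using lk by simp
      then have n4: "n \<ge> 4" using assms(2) by auto
      have "cos (pi/4) \<le> cos (pi / real n)" using cos_pin_ge[of 4 n] n4 by simp
      then have "sqrt 2 / 2 \<le> cos (pi / real n)" by (simp add: cos_45)
      then have "(sqrt 2 / 2)^2 \<le> cos (pi / real n)^2" by (intro power_mono) auto
      then have "2 \<le> x^2" by (simp add: x_def power_mult_distrib power_divide)
      then have "0 \<le> riley_lambda x ys" using lys by auto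
      moreover have "c1 = 0" using c1eq True by simp
      ultimately show ?thesis by simp
    next
      case False
      then have "cos (pi/3) \<le> cos (pi / real (Suc k))" using cos_pin_ge[of 3 "Suc k"] k1 by simp
      then have "c1 \<le> -1" using c1eq cos_60 by simp
      then show ?thesis using lys1 by simp
    qed
    obtain y1 where y1: "ys \<le> y1" "y1 \<le> 4" "riley_lambda x y1 = c1"
      using exists_lam[OF u4 ys4 c1hi c1lo] by auto
    obtain y2 where y2: "ys \<le> y2" "y2 \<le> 4" "riley_lambda x y2 = c2"
      using exists_lam[OF u4 ys4 _ c2lo] c2hi lys1 by auto
    have "y2 > x^2 - 1" using lam_ne y2 c2hi by simp
    then have b2: "riley_beta x y2 < 0" by (rule beneg)
    have a1: "riley_alpha x y1 < 0" using alneg y1 by simp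
    have p1: "riley_phi l x y1 = (-1)^k * riley_alpha x y1" using phik y1 S1a S1b by simp
    have p2: "riley_phi l x y2 = - ((-1)^k * riley_beta x y2)" using phik y2 S2a S2b by simp
    have "riley_phi l x y1 * riley_phi l x y2
        = - (((-1)^k * (-1)^k) * (riley_alpha x y1 * riley_beta x y2))"
      unfolding p1 p2 by (simp add: algebra_simps)
    also have "\<dots> = - (riley_alpha x y1 * riley_beta x y2)" by (simp add: neg1_sq)
    also have "\<dots> < 0" using a1 b2 by (simp add: mult_neg_neg)
    finally have pr: "riley_phi l x y1 * riley_phi l x y2 < 0" .
    have "2 \<le> y1" "2 \<le> y2" using ys2 y1 y2 by auto
    then show ?thesis using root_above_2[OF _ _ pr] by blast
  qed
  then show ?thesis unfolding x_def .
qed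

end
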